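(* Let $D$ be a distribution supported on $[0,1]$ with mean $\mu$ and variance $\sigma^2$, and $\epsilon>0$. The sample-reusing mean estimator (described in the context) returns $\hat\mu$ such that with probability at least $1/4$, $|\hat\mu-\mu|\le\epsilon$. Moreover, its expected number of samples is $O\left(\frac{\sigma^2}{\epsilon^2}+\frac1\epsilon\right)$.
   Context: Sample-reusing mean estimator (integer rounding ignored): set $T_1=1+\frac{10}{\epsilon}$; draw i.i.d. $X_1,\dots,X_{T_1}\sim D$; compute $\tilde\mu=\frac1{T_1}\sum_{i=1}^{T_1}X_i$ and $\tilde\sigma^2=\frac1{T_1-1}\sum_{i=1}^{T_1}(X_i-\tilde\mu)^2$; set $T_2=\max\left(\frac{60\tilde\sigma^2}{\epsilon^2}-T_1,0\right)$; draw $T_2$ fresh samples $X_{T_1+1},\dots,X_{T_1+T_2}$; return $\hat\mu=\frac{1}{T_1+T_2}\sum_{i=1}^{T_1+T_2}X_i$. *)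

theory Defs
  imports "HOL-Probability.Probability"
begin

text \<open>Samples are modelled as an infinite i.i.d. sequence omega :: nat => real drawn from
  the product measure of copies of D; the estimator reads omega 0, omega 1, ... in order.\<close>

definition T1 :: "real \<Rightarrow> nat" where
  "T1 \<epsilon> = nat \<lceil>1 + 10 / \<epsilon>\<rceil>"

definition emp_mean :: "nat \<Rightarrow> (nat \<Rightarrow> real) \<Rightarrow> real" where
  "emp_mean n \<omega> = (\<Sum>i<n. \<omega> i) / real n"

definition emp_var :: "nat \<Rightarrow> (nat \<Rightarrow> real) \<Rightarrow> real" where
  "emp_var n \<omega> = (\<Sum>i<n. (\<omega> i - emp_mean n \<omega>)^2) / (real n - 1)"

definition T2 :: "real \<Rightarrow> (nat \<Rightarrow> real) \<Rightarrow> nat" where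
  "T2 \<epsilon> \<omega> = nat \<lceil>max (60 * emp_var (T1 \<epsilon>) \<omega> / \<epsilon>^2 - real (T1 \<epsilon>)) 0\<rceil>"

definition num_samples :: "real \<Rightarrow> (nat \<Rightarrow> real) \<Rightarrow> nat" where
  "num_samples \<epsilon> \<omega> = T1 \<epsilon> + T2 \<epsilon> \<omega>"

definition estimate :: "real \<Rightarrow> (nat \<Rightarrow> real) \<Rightarrow> real" where
  "estimate \<epsilon> \<omega> = emp_mean (num_samples \<epsilon> \<omega>) \<omega>"

end

theory Submission
  imports Defs
begin


lemma sq_expand_sum:
  fixes x :: "nat \<Rightarrow> real"
  shows "(\<Sum>i<n. (x i - c)\<^sup>2) = (\<Sum>i<n. (x i)\<^sup>2) - 2 * c * (\<Sum>i<n. x i) + real n * c\<^sup>2"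
proof -
  have "(\<Sum>i<n. (x i - c)\<^sup>2) = (\<Sum>i<n. (x i)\<^sup>2 - (2*c) * x i + c\<^sup>2)"
    by (simp add: power2_diff algebra_simps)
  also have "\<dots> = (\<Sum>i<n. (x i)\<^sup>2) - (2*c) * (\<Sum>i<n. x i) + real n * c\<^sup>2"
    by (simp add: sum.distrib sum_subtractf sum_distrib_left)
  finally show ?thesis by simp
qed

lemma least_sq:
  fixes x :: "nat \<Rightarrow> real"
  assumes "0 < n"
  shows "(\<Sum>i<n. (x i - c)\<^sup>2) = (\<Sum>i<n. (x i - emp_mean n x)\<^sup>2) + (\<Sum>i<n. (x i - c))\<^sup>2 / real n"
proof -
  define S where "S = (\<Sum>i<n. x i)"
  have m: "emp_mean n x = S / n" unfolding emp_mean_def S_def ..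
  have s: "(\<Sum>i<n. (x i - c)) = S - n * c" by (simp add: S_def sum_subtractf)
  have key: "Q - 2 * c * S + real n * c\<^sup>2 = (Q - 2 * (S/n) * S + real n * (S/n)\<^sup>2) + (S - n * c)\<^sup>2 / real n" for Q
    using assms by (simp add: field_simps power2_eq_square)
  show ?thesis
    unfolding m s sq_expand_sum[of x c n] sq_expand_sum[of x "S / real n" n] S_def[symmetric]
    by (rule key)
qed

lemma T1_ge: "0 < e \<Longrightarrow> 1 + 10 / e \<le> real (T1 e)"
  unfolding T1_def by (simp add: le_of_int_ceiling) 

lemma T1_le: "0 < e \<Longrightarrow> real (T1 e) \<le> 2 + 10 / e"
  unfolding T1_def
proof -
  assume e: "0 < e"
  have "0 < 1 + 10/e" using e by (simp add: add_pos_pos)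
  then have "real (nat \<lceil>1 + 10 / e\<rceil>) = of_int \<lceil>1 + 10 / e\<rceil>" by simp
  also have "\<dots> \<le> 2 + 10/e" using ceiling_correct[of "1 + 10/e"] by linarith
  finally show "real (nat \<lceil>1 + 10 / e\<rceil>) \<le> 2 + 10 / e" .
qed

lemma T1_ge2: "0 < e \<Longrightarrow> 2 \<le> T1 e"
proof -
  assume e: "0 < e"
  have "1 + 10/e \<le> of_int \<lceil>1 + 10/e\<rceil>" by (rule le_of_int_ceiling)
  moreover have "0 < 10/e" using e by simp
  ultimately have "(1::real) < of_int \<lceil>1 + 10/e\<rceil>" by linarith
  then have "1 < \<lceil>1 + 10/e\<rceil>" by simp
  then show ?thesis unfolding T1_def by linarith
qed

lemma emp_var_nonneg: "2 \<le> n \<Longrightarrow> 0 \<le> emp_var n x"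
  unfolding emp_var_def by (intro divide_nonneg_nonneg sum_nonneg) auto

lemma emp_mean_restrict: "emp_mean n (restrict x {..<n}) = emp_mean n x"
  unfolding emp_mean_def by simp

lemma emp_var_restrict: "emp_var n (restrict x {..<n}) = emp_var n x"
  unfolding emp_var_def emp_mean_restrict by simp

lemma T2_restrict: "T2 e (restrict x {..<T1 e}) = T2 e x"
  unfolding T2_def emp_var_restrict ..

lemma T2_lower: "0 < e \<Longrightarrow> 60 * emp_var (T1 e) x / e\<^sup>2 \<le> real (T1 e) + real (T2 e x)"
  unfolding T2_def by (simp add: le_of_int_ceiling) linarith

lemma T2_upper: "0 < e \<Longrightarrow> real (T2 e x) \<le> 60 * emp_var (T1 e) x / e\<^sup>2 + 1"
proof -
  assume e: "0 < e"
  have v: "0 \<le> emp_var (T1 e) x" using emp_var_nonneg T1_ge2 e by blast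
  have "real (T2 e x) = of_int \<lceil>max (60 * emp_var (T1 e) x / e\<^sup>2 - real (T1 e)) 0\<rceil>"
    unfolding T2_def by simp
  also have "\<dots> \<le> max (60 * emp_var (T1 e) x / e\<^sup>2 - real (T1 e)) 0 + 1"
    using ceiling_correct by linarith
  also have "\<dots> \<le> 60 * emp_var (T1 e) x / e\<^sup>2 + 1" using v e by auto
  finally show ?thesis .
qed


definition cube :: "(nat \<Rightarrow> real) \<Rightarrow> bool" where
  "cube \<omega> \<longleftrightarrow> (\<forall>i. 0 \<le> \<omega> i \<and> \<omega> i \<le> 1)"

definition BB :: "(real \<Rightarrow> real) \<Rightarrow> bool" where
  "BB f \<longleftrightarrow> f \<in> borel_measurable borel \<and> (\<exists>c. \<forall>x. 0 \<le> x \<and> x \<le> 1 \<longrightarrow> \<bar>f x\<bar> \<le> c)"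

locale sre =
  fixes D :: "real measure"
  assumes D: "prob_space D" and sD: "sets D = sets borel" and aeD: "AE x in D. 0 \<le> x \<and> x \<le> 1"
begin

abbreviation PM where "PM \<equiv> PiM UNIV (\<lambda>_::nat. D)"

sublocale PS: product_prob_space "\<lambda>_::nat. D" UNIV
  by (intro product_prob_space.intro product_sigma_finite.intro product_prob_space_axioms.intro)
     (auto intro: D prob_space_imp_sigma_finite)

lemma meas_D: "f \<in> borel_measurable borel \<Longrightarrow> f \<in> borel_measurable D"
  by (subst measurable_cong_sets[OF sD refl])

lemma meas_D': "f \<in> borel_measurable D \<Longrightarrow> f \<in> borel_measurable borel"
  by (subst (asm) measurable_cong_sets[OF sD refl])

lemma comp_meas[measurable]: "(\<lambda>\<omega>. \<omega> i) \<in> borel_measurable PM"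
  proof -
  have "(\<lambda>\<omega>. \<omega> i) \<in> measurable PM D" by (rule measurable_component_singleton) simp
  then show ?thesis by (subst (asm) measurable_cong_sets[OF refl sD])
qed

lemma comp_meas2[measurable (raw)]: "i \<in> I \<Longrightarrow> (\<lambda>\<omega>. \<omega> i) \<in> borel_measurable (PiM I (\<lambda>_::nat. D))"
  proof -
  assume "i \<in> I"
  then have "(\<lambda>\<omega>. \<omega> i) \<in> measurable (PiM I (\<lambda>_::nat. D)) D" by (rule measurable_component_singleton)
  then show ?thesis by (subst (asm) measurable_cong_sets[OF refl sD])
qed

lemma comp_measD: "(\<lambda>\<omega>. \<omega> i) \<in> measurable PM D"
  by (rule measurable_component_singleton) simp

lemma int_comp: "integrable D (f :: real \<Rightarrow> real) \<Longrightarrow> integrable PM (\<lambda>\<omega>. f (\<omega> i))"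
proof -
  assume f: "integrable D f"
  then have fm: "f \<in> borel_measurable D" by auto
  have "integrable (distr PM D (\<lambda>\<omega>. \<omega> i)) f" using PS.PiM_component[of i] f by simp
  then show ?thesis using integrable_distr_eq[of "\<lambda>\<omega>. \<omega> i" PM D f] comp_measD fm by simp
qed

lemma integral_comp: "(f :: real \<Rightarrow> real) \<in> borel_measurable D \<Longrightarrow> (\<integral>\<omega>. f (\<omega> i) \<partial>PM) = (\<integral>x. f x \<partial>D)"
proof -
  assume f: "f \<in> borel_measurable D"
  have "(\<integral>x. f x \<partial>distr PM D (\<lambda>\<omega>. \<omega> i)) = (\<integral>\<omega>. f (\<omega> i) \<partial>PM)"
    using integral_distr[of "\<lambda>\<omega>. \<omega> i" PM D f] comp_measD f by simp
  then show ?thesis using PS.PiM_component[of i] by simp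
qed

lemma indep_coords: "PS.P.indep_vars (\<lambda>_. D) (\<lambda>i \<omega>. \<omega> i) UNIV"
proof -
  have "distr PM (PiM UNIV (\<lambda>_. D)) (\<lambda>x. \<lambda>i\<in>UNIV. x i) = PiM UNIV (\<lambda>i. distr PM D (\<lambda>\<omega>. \<omega> i))"
    using PS.PiM_component by (simp add: restrict_UNIV)
  then show ?thesis
    by (subst PS.P.indep_vars_iff_distr_eq_PiM) auto
qed

lemma master:
  fixes H :: "(nat \<Rightarrow> real) \<Rightarrow> real" and f g :: "real \<Rightarrow> real"
  assumes B: "finite B" "i \<notin> B" "j \<notin> B" "i \<noteq> j"
  and Hm: "H \<in> borel_measurable (PiM B (\<lambda>_. D))"
  and Hi: "integrable PM (\<lambda>\<omega>. H (restrict \<omega> B))"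
  and f: "integrable D f" and g: "integrable D g"
  shows "(\<integral>\<omega>. H (restrict \<omega> B) * f (\<omega> i) * g (\<omega> j) \<partial>PM)
     = (\<integral>\<omega>. H (restrict \<omega> B) \<partial>PM) * (\<integral>x. f x \<partial>D) * (\<integral>x. g x \<partial>D)"
proof -
  define K where "K = (\<lambda>l::nat. if l = 0 then B else if l = 1 then {i} else {j})"
  define Y where "Y = (\<lambda>l::nat. if l = 0 then H else if l = 1 then (\<lambda>x. f (x i)) else (\<lambda>x. g (x j)))"
  have ind: "PS.P.indep_vars (\<lambda>l. PiM (K l) (\<lambda>_. D)) (\<lambda>l \<omega>. restrict (\<lambda>k. \<omega> k) (K l)) {0,1,2}"
    by (rule PS.P.indep_vars_restrict[OF indep_coords]) (use B in \<open>auto simp: K_def disjoint_family_on_def\<close>)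
  have fm[measurable]: "f \<in> borel_measurable borel" "g \<in> borel_measurable borel"
    using f g meas_D' by auto
  have ind2: "PS.P.indep_vars (\<lambda>_. borel) (\<lambda>l \<omega>. Y l (restrict (\<lambda>k. \<omega> k) (K l))) {0,1,2}"
  proof (rule PS.P.indep_vars_compose2[OF ind])
    fix l :: nat assume "l \<in> {0,1,2}"
    then show "Y l \<in> borel_measurable (PiM (K l) (\<lambda>_. D))"
      using Hm by (auto simp: Y_def K_def)
  qed
  have ints: "integrable PM (\<lambda>\<omega>. Y l (restrict (\<lambda>k. \<omega> k) (K l)))" if "l \<in> {0,1,2}" for l
    using that Hi int_comp[OF f, of i] int_comp[OF g, of j] by (auto simp: Y_def K_def)
  have "(\<integral>\<omega>. (\<Prod>l\<in>{0,1,2}. Y l (restrict (\<lambda>k. \<omega> k) (K l))) \<partial>PM)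
      = (\<Prod>l\<in>{0,1,2}. \<integral>\<omega>. Y l (restrict (\<lambda>k. \<omega> k) (K l)) \<partial>PM)"
    by (rule PS.P.indep_vars_lebesgue_integral[OF _ ind2 ints]) auto
  then show ?thesis
    using integral_comp[of f i] integral_comp[of g j] f g
    by (simp add: Y_def K_def mult.assoc)
qed

definition FB :: "nat \<Rightarrow> ((nat \<Rightarrow> real) \<Rightarrow> real) \<Rightarrow> bool" where
  "FB n h \<longleftrightarrow> h \<in> borel_measurable (PiM {..<n} (\<lambda>_. D)) \<and> (\<forall>\<omega>. h (restrict \<omega> {..<n}) = h \<omega>)
     \<and> (\<exists>c. \<forall>\<omega>. cube \<omega> \<longrightarrow> \<bar>h \<omega>\<bar> \<le> c)"

lemma AE_cube: "AE \<omega> in PM. cube \<omega>"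
proof -
  have "AE \<omega> in PM. 0 \<le> \<omega> i \<and> \<omega> i \<le> 1" for i
    by (rule PS.AE_component[where P="\<lambda>x. 0 \<le> x \<and> x \<le> 1", OF UNIV_I aeD])
  then show ?thesis unfolding cube_def by (subst AE_all_countable) auto
qed

lemma integrable_cube:
  assumes "h \<in> borel_measurable PM" "\<And>\<omega>. cube \<omega> \<Longrightarrow> \<bar>h \<omega>\<bar> \<le> (c::real)"
  shows "integrable PM h"
  by (rule PS.P.integrable_const_bound[where B=c]) (use AE_cube assms in auto)

lemma BB_integrable: "BB f \<Longrightarrow> integrable D f"
  unfolding BB_def
  by (elim conjE exE, rule PS.M.integrable_const_bound) (use aeD meas_D in auto)

lemma FB_meas: "FB n h \<Longrightarrow> h \<in> borel_measurable PM"
proof -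
  assume h: "FB n h"
  have "(\<lambda>\<omega>. h (restrict \<omega> {..<n})) \<in> borel_measurable PM"
    using h unfolding FB_def by (intro measurable_compose[OF measurable_restrict_subset]) auto
  then show ?thesis using h unfolding FB_def by simp
qed

lemma FB_integrable: assumes "FB n h" shows "integrable PM h"
proof -
  obtain c where "\<forall>\<omega>. cube \<omega> \<longrightarrow> \<bar>h \<omega>\<bar> \<le> c" using assms unfolding FB_def by blast
  then show ?thesis using FB_meas[OF assms] by (intro integrable_cube[where c=c]) auto
qed

lemma FB_mult: "FB n h \<Longrightarrow> FB n g \<Longrightarrow> FB n (\<lambda>\<omega>. h \<omega> * g \<omega>)"
  unfolding FB_def
proof (elim conjE exE, intro conjI exI allI impI)
  fix c d \<omega> assume "\<forall>\<omega>. cube \<omega> \<longrightarrow> \<bar>h \<omega>\<bar> \<le> c" "\<forall>\<omega>. cube \<omega> \<longrightarrow> \<bar>g \<omega>\<bar> \<le> d" "cube \<omega>"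
  then show "\<bar>h \<omega> * g \<omega>\<bar> \<le> c * d"
    by (simp add: abs_mult mult_mono')
qed auto

lemma FB_const: "FB n (\<lambda>_. c)"
  unfolding FB_def by auto

lemma master2:
  assumes h: "FB n h" and ij: "n \<le> i" "n \<le> j" "i \<noteq> j" and f: "BB f" and g: "BB g"
  shows "(\<integral>\<omega>. h \<omega> * f (\<omega> i) * g (\<omega> j) \<partial>PM) = (\<integral>\<omega>. h \<omega> \<partial>PM) * (\<integral>x. f x \<partial>D) * (\<integral>x. g x \<partial>D)"
  using master[of "{..<n}" i j h f g] h ij BB_integrable[OF f] BB_integrable[OF g] FB_integrable[OF h]
  unfolding FB_def by auto

lemma BB_one: "BB (\<lambda>_. 1)" unfolding BB_def by auto

lemma master1:
  assumes h: "FB n h" and i: "n \<le> i" and f: "BB f"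
  shows "(\<integral>\<omega>. h \<omega> * f (\<omega> i) \<partial>PM) = (\<integral>\<omega>. h \<omega> \<partial>PM) * (\<integral>x. f x \<partial>D)"
  using master2[OF h i, of "n+i+1" f "\<lambda>_. 1"] f BB_one PS.M.prob_space by simp

lemma int3:
  assumes h: "FB n h" and f: "BB f" and g: "BB g"
  shows "integrable PM (\<lambda>\<omega>. h \<omega> * f (\<omega> i) * g (\<omega> j))"
proof -
  obtain c where c: "\<And>\<omega>. cube \<omega> \<Longrightarrow> \<bar>h \<omega>\<bar> \<le> c" using h unfolding FB_def by blast
  obtain cf where cf: "\<And>x. 0 \<le> x \<Longrightarrow> x \<le> 1 \<Longrightarrow> \<bar>f x\<bar> \<le> cf" using f unfolding BB_def by blast
  obtain cg where cg: "\<And>x. 0 \<le> x \<Longrightarrow> x \<le> 1 \<Longrightarrow> \<bar>g x\<bar> \<le> cg" using g unfolding BB_def by blast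
  have [measurable]: "f \<in> borel_measurable borel" "g \<in> borel_measurable borel" "h \<in> borel_measurable PM"
    using f g FB_meas[OF h] unfolding BB_def by auto
  show ?thesis
  proof (rule integrable_cube[where c="c*cf*cg"])
    fix \<omega> assume w: "cube \<omega>"
    then have "\<bar>f (\<omega> i)\<bar> \<le> cf" "\<bar>g (\<omega> j)\<bar> \<le> cg" using cf cg unfolding cube_def by auto
    then show "\<bar>h \<omega> * f (\<omega> i) * g (\<omega> j)\<bar> \<le> c * cf * cg"
      using c[OF w] by (simp add: abs_mult mult_mono')
  qed measurable
qed

lemma int2:
  assumes h: "FB n h" and f: "BB f"
  shows "integrable PM (\<lambda>\<omega>. h \<omega> * f (\<omega> i))"
  using int3[OF h f BB_one, where i=i] by simp

lemma BB_mult: "BB f \<Longrightarrow> BB g \<Longrightarrow> BB (\<lambda>x. f x * g x)"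
  unfolding BB_def
proof (elim conjE exE, intro conjI exI allI impI)
  fix c d :: real and x :: real assume "\<forall>x. 0 \<le> x \<and> x \<le> 1 \<longrightarrow> \<bar>f x\<bar> \<le> c" "\<forall>x. 0 \<le> x \<and> x \<le> 1 \<longrightarrow> \<bar>g x\<bar> \<le> d" "0 \<le> x \<and> x \<le> 1"
  then show "\<bar>f x * g x\<bar> \<le> c * d"
    by (simp add: abs_mult mult_mono')
qed auto

lemma sq_sum_expand:
  fixes w a :: real and x :: "nat \<Rightarrow> real"
  shows "w * (a + (\<Sum>i\<in>J. x i))\<^sup>2 = w * a\<^sup>2 + (\<Sum>i\<in>J. 2 * (w * a) * x i) + (\<Sum>i\<in>J. \<Sum>j\<in>J. w * x i * x j)"
proof -
  have "(\<Sum>i\<in>J. x i) * (\<Sum>i\<in>J. x i) = (\<Sum>i\<in>J. \<Sum>j\<in>J. x i * x j)"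
    by (rule sum_product)
  then have "w * ((\<Sum>i\<in>J. x i) * (\<Sum>i\<in>J. x i)) = (\<Sum>i\<in>J. \<Sum>j\<in>J. w * x i * x j)"
    by (simp add: sum_distrib_left mult.assoc)
  moreover have "(\<Sum>i\<in>J. 2 * (w * a) * x i) = 2 * w * a * (\<Sum>i\<in>J. x i)"
    by (simp add: sum_distrib_left mult.assoc)
  ultimately show ?thesis
    by (simp add: power2_eq_square algebra_simps)
qed

lemma block:
  assumes w: "FB n w" and a: "FB n a" and b: "\<And>i. i \<in> J \<Longrightarrow> FB n (b i)"
    and J: "finite J" "\<And>i. i \<in> J \<Longrightarrow> n \<le> i" and f: "BB f" and f0: "(\<integral>x. f x \<partial>D) = 0"
  shows "(\<integral>\<omega>. w \<omega> * (a \<omega> + (\<Sum>i\<in>J. b i \<omega> * f (\<omega> i)))\<^sup>2 \<partial>PM)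
       = (\<integral>\<omega>. w \<omega> * (a \<omega>)\<^sup>2 \<partial>PM) + (\<integral>x. f x * f x \<partial>D) * (\<Sum>i\<in>J. \<integral>\<omega>. w \<omega> * (b i \<omega> * b i \<omega>) \<partial>PM)"
proof -
  have wa: "FB n (\<lambda>\<omega>. w \<omega> * a \<omega> * a \<omega>)" using FB_mult w a by blast
  have wab: "FB n (\<lambda>\<omega>. 2 * (w \<omega> * a \<omega>) * b i \<omega>)" if "i \<in> J" for i
    using FB_mult[OF FB_mult[OF FB_const FB_mult[OF w a]] b[OF that]] by simp
  have wbb: "FB n (\<lambda>\<omega>. w \<omega> * b i \<omega> * b j \<omega>)" if "i \<in> J" "j \<in> J" for i j
    using FB_mult[OF FB_mult[OF w b[OF that(1)]] b[OF that(2)]] by simp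
  have I1: "integrable PM (\<lambda>\<omega>. w \<omega> * (a \<omega>)\<^sup>2)"
    using FB_integrable[OF wa] by (simp add: power2_eq_square mult.assoc)
  have I2: "integrable PM (\<lambda>\<omega>. 2 * (w \<omega> * a \<omega>) * b i \<omega> * f (\<omega> i))" if "i \<in> J" for i
    using int2[OF wab[OF that] f] by simp
  have I3: "integrable PM (\<lambda>\<omega>. w \<omega> * b i \<omega> * b j \<omega> * f (\<omega> i) * f (\<omega> j))" if "i \<in> J" "j \<in> J" for i j
    using int3[OF wbb[OF that] f f] by simp
  have eq: "w \<omega> * (a \<omega> + (\<Sum>i\<in>J. b i \<omega> * f (\<omega> i)))\<^sup>2 = w \<omega> * (a \<omega>)\<^sup>2
      + (\<Sum>i\<in>J. 2 * (w \<omega> * a \<omega>) * b i \<omega> * f (\<omega> i))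
      + (\<Sum>i\<in>J. \<Sum>j\<in>J. w \<omega> * b i \<omega> * b j \<omega> * f (\<omega> i) * f (\<omega> j))" for \<omega>
    using sq_sum_expand[where w="w \<omega>" and a="a \<omega>" and J=J and x="\<lambda>i. b i \<omega> * f (\<omega> i)"] by (simp add: mult.assoc mult.left_commute)
  have T2: "(\<integral>\<omega>. 2 * (w \<omega> * a \<omega>) * b i \<omega> * f (\<omega> i) \<partial>PM) = 0" if "i \<in> J" for i
    using master1[OF wab[OF that] J(2)[OF that] f] f0 by simp
  have T3: "(\<integral>\<omega>. w \<omega> * b i \<omega> * b j \<omega> * f (\<omega> i) * f (\<omega> j) \<partial>PM)
      = (if i = j then (\<integral>\<omega>. w \<omega> * (b i \<omega> * b i \<omega>) \<partial>PM) * (\<integral>x. f x * f x \<partial>D) else 0)" if "i \<in> J" "j \<in> J" for i j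
  proof (cases "i = j")
    case True
    then show ?thesis
      using master1[OF wbb[OF that] J(2)[OF that(1)] BB_mult[OF f f]] by (simp add: mult.assoc)
  next
    case False
    then show ?thesis
      using master2[OF wbb[OF that] J(2)[OF that(1)] J(2)[OF that(2)] False f f] f0 by simp
  qed
  have "(\<integral>\<omega>. w \<omega> * (a \<omega> + (\<Sum>i\<in>J. b i \<omega> * f (\<omega> i)))\<^sup>2 \<partial>PM)
     = (\<integral>\<omega>. w \<omega> * (a \<omega>)\<^sup>2 \<partial>PM)
      + (\<Sum>i\<in>J. \<integral>\<omega>. 2 * (w \<omega> * a \<omega>) * b i \<omega> * f (\<omega> i) \<partial>PM)
      + (\<Sum>i\<in>J. \<Sum>j\<in>J. \<integral>\<omega>. w \<omega> * b i \<omega> * b j \<omega> * f (\<omega> i) * f (\<omega> j) \<partial>PM)"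
    unfolding eq
    by (simp add: I1 I2 I3 integrable_sum integral_sum)
  also have "\<dots> = (\<integral>\<omega>. w \<omega> * (a \<omega>)\<^sup>2 \<partial>PM)
      + (\<Sum>i\<in>J. \<Sum>j\<in>J. (if i = j then (\<integral>\<omega>. w \<omega> * (b i \<omega> * b i \<omega>) \<partial>PM) * (\<integral>x. f x * f x \<partial>D) else 0))"
    using T2 T3 by simp
  also have "\<dots> = (\<integral>\<omega>. w \<omega> * (a \<omega>)\<^sup>2 \<partial>PM) + (\<integral>x. f x * f x \<partial>D) * (\<Sum>i\<in>J. \<integral>\<omega>. w \<omega> * (b i \<omega> * b i \<omega>) \<partial>PM)"
    using J(1) by (simp add: sum_distrib_left mult.commute)
  finally show ?thesis .
qed

lemma sum_sq:
  assumes J: "finite J" and f: "BB f" and f0: "(\<integral>x. f x \<partial>D) = 0"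
  shows "(\<integral>\<omega>. (\<Sum>i\<in>J. f (\<omega> i))\<^sup>2 \<partial>PM) = real (card J) * (\<integral>x. f x * f x \<partial>D)"
  using block[of 0 "\<lambda>_. 1" "\<lambda>_. 0" J "\<lambda>_ _. 1" f] J f f0 FB_const PS.P.prob_space by simp

definition mu where "mu = (\<integral>x. x \<partial>D)"
definition s2 where "s2 = (\<integral>x. (x - mu)\<^sup>2 \<partial>D)"

lemma BB_poly: "BB (\<lambda>x. x)" "BB (\<lambda>x. x - c)" "BB (\<lambda>x. (x - c)\<^sup>2 - d)" "BB (\<lambda>x. (x - c)\<^sup>2)" "BB (\<lambda>x. (x - c)^4)"
proof -
  have b: "\<bar>x - c\<bar> \<le> 1 + \<bar>c\<bar>" if "0 \<le> x" "x \<le> 1" for x using that by auto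
  have b2: "\<bar>(x - c)^m\<bar> \<le> (1 + \<bar>c\<bar>)^m" if "0 \<le> x" "x \<le> 1" for x m
    unfolding power_abs by (rule power_mono[OF b[OF that]]) simp
  show "BB (\<lambda>x. x)" unfolding BB_def by (intro conjI exI[of _ 1] allI impI) auto
  show "BB (\<lambda>x. x - c)" unfolding BB_def by (intro conjI exI[of _ "1 + \<bar>c\<bar>"] allI impI) (use b in auto)
  show "BB (\<lambda>x. (x - c)\<^sup>2)" unfolding BB_def
  proof (intro conjI exI[of _ "(1 + \<bar>c\<bar>)^2"] allI impI)
    fix x :: real assume "0 \<le> x \<and> x \<le> 1" then show "\<bar>(x - c)\<^sup>2\<bar> \<le> (1 + \<bar>c\<bar>)^2" using b2 by blast
  qed measurable
  show "BB (\<lambda>x. (x - c)^4)" unfolding BB_def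
  proof (intro conjI exI[of _ "(1 + \<bar>c\<bar>)^4"] allI impI)
    fix x :: real assume "0 \<le> x \<and> x \<le> 1" then show "\<bar>(x - c)^4\<bar> \<le> (1 + \<bar>c\<bar>)^4" using b2 by blast
  qed measurable
  show "BB (\<lambda>x. (x - c)\<^sup>2 - d)" unfolding BB_def
  proof (intro conjI exI[of _ "(1 + \<bar>c\<bar>)^2 + \<bar>d\<bar>"] allI impI)
    fix x :: real assume "0 \<le> x \<and> x \<le> 1"
    then have "\<bar>(x - c)^2\<bar> \<le> (1 + \<bar>c\<bar>)^2" using b2 by blast
    then show "\<bar>(x - c)\<^sup>2 - d\<bar> \<le> (1 + \<bar>c\<bar>)\<^sup>2 + \<bar>d\<bar>" by linarith
  qed measurable
qed

lemma ints_D: "integrable D (\<lambda>x. x)" "integrable D (\<lambda>x. x - c)" "integrable D (\<lambda>x. (x - c)\<^sup>2)" "integrable D (\<lambda>x. (x - c)^4)"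
  using BB_poly BB_integrable by blast+

lemma mu_bounds: "0 \<le> mu" "mu \<le> 1"
proof -
  show "0 \<le> mu" unfolding mu_def by (rule integral_nonneg_AE) (use aeD in auto)
  have "(\<integral>x. x \<partial>D) \<le> (\<integral>x. 1 \<partial>D)"
    by (rule integral_mono_AE) (use aeD ints_D in auto)
  then show "mu \<le> 1" unfolding mu_def using PS.M.prob_space by simp
qed

lemma ae_dev: "AE x in D. \<bar>x - mu\<bar> \<le> 1"
  using aeD by eventually_elim (use mu_bounds in auto)

lemma s2_bounds: "0 \<le> s2" "s2 \<le> 1"
proof -
  show "0 \<le> s2" unfolding s2_def by (rule integral_nonneg_AE) auto
  have "(\<integral>x. (x - mu)\<^sup>2 \<partial>D) \<le> (\<integral>x. 1 \<partial>D)"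
  proof (rule integral_mono_AE)
    show "AE x in D. (x - mu)\<^sup>2 \<le> 1" using ae_dev
      by eventually_elim (simp add: abs_square_le_1)
  qed (use ints_D in auto)
  then show "s2 \<le> 1" unfolding s2_def using PS.M.prob_space by simp
qed

lemma f1_props: "(\<integral>x. x - mu \<partial>D) = 0" "(\<integral>x. (x - mu) * (x - mu) \<partial>D) = s2"
proof -
  show "(\<integral>x. x - mu \<partial>D) = 0"
    using ints_D by (simp add: integral_diff mu_def PS.M.prob_space)
  show "(\<integral>x. (x - mu) * (x - mu) \<partial>D) = s2" unfolding s2_def by (simp add: power2_eq_square)
qed

lemma f2_props: "(\<integral>x. (x - mu)\<^sup>2 - s2 \<partial>D) = 0" "(\<integral>x. ((x - mu)\<^sup>2 - s2) * ((x - mu)\<^sup>2 - s2) \<partial>D) \<le> s2"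
proof -
  show "(\<integral>x. (x - mu)\<^sup>2 - s2 \<partial>D) = 0"
    using ints_D by (simp add: integral_diff s2_def PS.M.prob_space)
  have e: "((x - mu)\<^sup>2 - s2) * ((x - mu)\<^sup>2 - s2) = (x - mu)^4 - (2 * s2) * (x - mu)\<^sup>2 + s2 * s2" for x
    by (simp add: algebra_simps power2_eq_square power4_eq_xxxx)
  have eq: "(\<integral>x. ((x - mu)\<^sup>2 - s2) * ((x - mu)\<^sup>2 - s2) \<partial>D) = (\<integral>x. (x - mu)^4 \<partial>D) - (2 * s2) * s2 + s2 * s2"
    unfolding e using ints_D PS.M.prob_space by (simp add: integral_diff integral_add s2_def)
  have le: "(\<integral>x. (x - mu)^4 \<partial>D) \<le> (\<integral>x. (x - mu)\<^sup>2 \<partial>D)"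
  proof (rule integral_mono_AE)
    show "AE x in D. (x - mu)^4 \<le> (x - mu)\<^sup>2" using ae_dev
    proof eventually_elim
      fix x assume "\<bar>x - mu\<bar> \<le> 1"
      then have "(x-mu)^2 \<le> 1" by (simp add: abs_square_le_1)
      then have "(x-mu)^2 * (x-mu)^2 \<le> 1 * (x-mu)^2" by (intro mult_right_mono) auto
      then show "(x - mu)^4 \<le> (x - mu)\<^sup>2" by (simp add: power4_eq_xxxx power2_eq_square)
    qed
  qed (use ints_D in auto)
  have "0 \<le> s2 * s2" by simp
  then show "(\<integral>x. ((x - mu)\<^sup>2 - s2) * ((x - mu)\<^sup>2 - s2) \<partial>D) \<le> s2"
    using eq le unfolding s2_def[symmetric] by linarith
qed

end

locale sre2 = sre +
  fixes e :: real
  assumes e: "0 < e"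
begin

abbreviation n where "n \<equiv> T1 e"
definition A where "A \<omega> = (\<Sum>i<n. \<omega> i - mu)"
definition Q where "Q \<omega> = (\<Sum>i<n. (\<omega> i - mu)\<^sup>2)"
definition C0 where "C0 \<omega> \<longleftrightarrow> (\<forall>i<n. 0 \<le> \<omega> i \<and> \<omega> i \<le> 1)"
definition K where "K = nat \<lceil>30 / e\<^sup>2\<rceil>"

lemma n_ge2: "2 \<le> n" using T1_ge2[OF e] .
lemma n_ge: "1 + 10 / e \<le> real n" using T1_ge[OF e] .

lemma T2_meas[measurable]: "T2 e \<in> measurable (PiM {..<n} (\<lambda>_. D)) (count_space UNIV)"
  unfolding T2_def emp_var_def emp_mean_def by measurable

lemma num_meas[measurable]: "num_samples e \<in> measurable PM (count_space UNIV)"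
  unfolding num_samples_def T2_def emp_var_def emp_mean_def by measurable

lemma est_meas[measurable]: "estimate e \<in> borel_measurable PM"
  unfolding estimate_def
  by (rule measurable_compose_countable[where f="\<lambda>m \<omega>. emp_mean m \<omega>" and g="num_samples e"])
     (unfold emp_mean_def, measurable)

lemma EA2: "(\<integral>\<omega>. (A \<omega>)\<^sup>2 \<partial>PM) = real n * s2"
  unfolding A_def using sum_sq[of "{..<n}" "\<lambda>x. x - mu"] BB_poly f1_props by simp

lemma EQ2: "(\<integral>\<omega>. (Q \<omega> - real n * s2)\<^sup>2 \<partial>PM) \<le> real n * s2"
proof -
  have "Q \<omega> - real n * s2 = (\<Sum>i<n. (\<omega> i - mu)\<^sup>2 - s2)" for \<omega>
    unfolding Q_def by (simp add: sum_subtractf)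
  then have "(\<integral>\<omega>. (Q \<omega> - real n * s2)\<^sup>2 \<partial>PM) = real n * (\<integral>x. ((x - mu)\<^sup>2 - s2) * ((x - mu)\<^sup>2 - s2) \<partial>D)"
    using sum_sq[of "{..<n}" "\<lambda>x. (x - mu)\<^sup>2 - s2"] BB_poly f2_props by simp
  also have "\<dots> \<le> real n * s2" using f2_props by (intro mult_left_mono) auto
  finally show ?thesis .
qed

lemma Q_decomp: "Q \<omega> = (real n - 1) * emp_var n \<omega> + (A \<omega>)\<^sup>2 / real n"
  using least_sq[of n \<omega> mu] n_ge2 unfolding Q_def A_def emp_var_def by simp

lemma V_le: "C0 \<omega> \<Longrightarrow> emp_var n \<omega> \<le> 1/2"
proof -
  assume c: "C0 \<omega>"
  have "(\<Sum>i<n. (\<omega> i - emp_mean n \<omega>)\<^sup>2) \<le> (\<Sum>i<n. (\<omega> i - 1/2)\<^sup>2)"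
    using least_sq[of n \<omega> "1/2"] n_ge2 by simp
  also have "\<dots> \<le> (\<Sum>i<n. 1/4)"
  proof (rule sum_mono)
    fix i assume "i \<in> {..<n}"
    then have "0 \<le> \<omega> i" "\<omega> i \<le> 1" using c unfolding C0_def by auto
    then have "\<omega> i * (\<omega> i - 1) \<le> 0" by (intro mult_nonneg_nonpos) auto
    then show "(\<omega> i - 1/2)\<^sup>2 \<le> 1/4" by (simp add: power2_eq_square algebra_simps)
  qed
  also have "\<dots> = real n / 4" by simp
  finally have s: "(\<Sum>i<n. (\<omega> i - emp_mean n \<omega>)\<^sup>2) \<le> real n / 4" .
  have n1: "real n - 1 \<ge> 1" using n_ge2 by simp
  have "emp_var n \<omega> \<le> (real n / 4) / (real n - 1)"
    unfolding emp_var_def using s n1 by (intro divide_right_mono) auto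
  also have "\<dots> \<le> 1/2" using n1 by (simp add: field_simps)
  finally show ?thesis .
qed

lemma k_le_K: "C0 \<omega> \<Longrightarrow> T2 e \<omega> \<le> K"
proof -
  assume c: "C0 \<omega>"
  have v: "0 \<le> emp_var n \<omega>" using emp_var_nonneg n_ge2 by blast
  have "60 * emp_var n \<omega> / e\<^sup>2 \<le> 60 * (1/2) / e\<^sup>2"
    using V_le[OF c] e by (intro divide_right_mono) auto
  then have "max (60 * emp_var n \<omega> / e\<^sup>2 - real n) 0 \<le> 30 / e\<^sup>2" using e by auto
  then show ?thesis unfolding T2_def K_def by (intro nat_mono ceiling_mono)
qed

lemma AE_C0: "AE \<omega> in PM. C0 \<omega>"
  using AE_cube by eventually_elim (auto simp: cube_def C0_def)

lemma dev_bound: "cube \<omega> \<Longrightarrow> \<bar>\<omega> i - mu\<bar> \<le> 1"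
proof -
  assume "cube \<omega>"
  then have "0 \<le> \<omega> i" "\<omega> i \<le> 1" unfolding cube_def by auto
  then show ?thesis using mu_bounds unfolding abs_le_iff by linarith
qed

lemma FB_A: "FB n A"
  unfolding FB_def
proof (intro conjI exI[of _ "real n"] allI impI)
  show "A \<in> borel_measurable (PiM {..<n} (\<lambda>_. D))" unfolding A_def[abs_def] by measurable
  fix \<omega>
  show "A (restrict \<omega> {..<n}) = A \<omega>" unfolding A_def by simp
  assume c: "cube \<omega>"
  have "\<bar>A \<omega>\<bar> \<le> (\<Sum>i<n. \<bar>\<omega> i - mu\<bar>)" unfolding A_def by (rule sum_abs)
  also have "\<dots> \<le> (\<Sum>i<n. 1)" using dev_bound[OF c] by (intro sum_mono) auto
  finally show "\<bar>A \<omega>\<bar> \<le> real n" by simp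
qed

definition W :: "((nat \<Rightarrow> real) \<Rightarrow> bool) \<Rightarrow> (nat \<Rightarrow> real) \<Rightarrow> real" where
  "W Pr \<omega> = (if C0 \<omega> \<and> Pr \<omega> then 1 / (e\<^sup>2 * (real (n + T2 e \<omega>))\<^sup>2) else 0)"

definition cc :: "nat \<Rightarrow> (nat \<Rightarrow> real) \<Rightarrow> real" where
  "cc i \<omega> = (if i < n + T2 e \<omega> then 1 else 0)"

lemma FB_cc: "FB n (cc i)"
  unfolding FB_def
proof (intro conjI exI[of _ 1] allI impI)
  show "cc i \<in> borel_measurable (PiM {..<n} (\<lambda>_. D))" unfolding cc_def[abs_def] by measurable
  fix \<omega>
  show "cc i (restrict \<omega> {..<n}) = cc i \<omega>" unfolding cc_def T2_restrict ..
  show "\<bar>cc i \<omega>\<bar> \<le> 1" unfolding cc_def by simp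
qed

lemma W_bound: "0 \<le> W Pr \<omega>" "W Pr \<omega> \<le> 1 / e\<^sup>2"
proof -
  have N: "1 \<le> real (n + T2 e \<omega>)" using n_ge2 by simp
  then have "1 \<le> (real (n + T2 e \<omega>))\<^sup>2" by (simp add: one_le_power)
  then have "e\<^sup>2 * 1 \<le> e\<^sup>2 * (real (n + T2 e \<omega>))\<^sup>2" using e by (intro mult_left_mono) auto
  then have "1 / (e\<^sup>2 * (real (n + T2 e \<omega>))\<^sup>2) \<le> 1 / e\<^sup>2" using e by (intro frac_le) auto
  then show "W Pr \<omega> \<le> 1 / e\<^sup>2" unfolding W_def using e by auto
  show "0 \<le> W Pr \<omega>" unfolding W_def by auto
qed

lemma FB_W:
  assumes Prm[measurable]: "Measurable.pred (PiM {..<n} (\<lambda>_. D)) Pr" and Prr: "\<And>\<omega>. Pr (restrict \<omega> {..<n}) = Pr \<omega>"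
  shows "FB n (W Pr)"
  unfolding FB_def
proof (intro conjI exI[of _ "1 / e\<^sup>2"] allI impI)
  have T[measurable]: "(\<lambda>\<omega>. real (T2 e \<omega>)) \<in> borel_measurable (PiM {..<n} (\<lambda>_. D))"
    by (rule measurable_compose[OF T2_meas]) simp
  have C[measurable]: "Measurable.pred (PiM {..<n} (\<lambda>_. D)) C0" unfolding C0_def by measurable
  show "W Pr \<in> borel_measurable (PiM {..<n} (\<lambda>_. D))" unfolding W_def[abs_def] of_nat_add by measurable
  fix \<omega>
  show "W Pr (restrict \<omega> {..<n}) = W Pr \<omega>" unfolding W_def T2_restrict C0_def Prr by simp
  show "\<bar>W Pr \<omega>\<bar> \<le> 1 / e\<^sup>2" using W_bound[of Pr \<omega>] by simp
qed

lemma A_abs: "cube \<omega> \<Longrightarrow> \<bar>A \<omega>\<bar> \<le> real n"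
proof -
  assume c: "cube \<omega>"
  have "\<bar>A \<omega>\<bar> \<le> (\<Sum>i<n. \<bar>\<omega> i - mu\<bar>)" unfolding A_def by (rule sum_abs)
  also have "\<dots> \<le> (\<Sum>i<n. 1)" using dev_bound[OF c] by (intro sum_mono) auto
  finally show "\<bar>A \<omega>\<bar> \<le> real n" by simp
qed

lemma Pr_meas:
  assumes "Measurable.pred (PiM {..<n} (\<lambda>_. D)) Pr" and "\<And>\<omega>. Pr (restrict \<omega> {..<n}) = Pr \<omega>"
  shows "Measurable.pred PM Pr"
proof -
  have "Measurable.pred PM (\<lambda>\<omega>. Pr (restrict \<omega> {..<n}))"
    using assms(1) by (intro measurable_compose[OF measurable_restrict_subset]) auto
  then show ?thesis using assms(2) by simp
qed

lemma C0_meas[measurable]: "Measurable.pred PM C0"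
  unfolding C0_def by measurable

lemma main_bound:
  assumes Prm[measurable]: "Measurable.pred (PiM {..<n} (\<lambda>_. D)) Pr" and Prr: "\<And>\<omega>. Pr (restrict \<omega> {..<n}) = Pr \<omega>"
  shows "PS.P.prob {\<omega> \<in> space PM. \<not> \<bar>estimate e \<omega> - mu\<bar> \<le> e}
     \<le> (\<integral>\<omega>. W Pr \<omega> * (A \<omega>)\<^sup>2 \<partial>PM) + s2 * (\<integral>\<omega>. W Pr \<omega> * real (T2 e \<omega>) \<partial>PM)
       + PS.P.prob {\<omega> \<in> space PM. \<not> (C0 \<omega> \<and> Pr \<omega>)}"
proof -
  define J where "J = {n..<n+K}"
  define \<Phi> where "\<Phi> \<omega> = W Pr \<omega> * (A \<omega> + (\<Sum>i\<in>J. cc i \<omega> * (\<omega> i - mu)))\<^sup>2" for \<omega>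
  have Prm'[measurable]: "Measurable.pred PM Pr" using Pr_meas[OF Prm Prr] .
  have [measurable]: "W Pr \<in> borel_measurable PM" "A \<in> borel_measurable PM" "cc i \<in> borel_measurable PM" for i
    using FB_meas[OF FB_W[OF Prm Prr]] FB_meas[OF FB_A] FB_meas[OF FB_cc] by auto
  have \<Phi>m[measurable]: "\<Phi> \<in> borel_measurable PM" unfolding \<Phi>_def[abs_def] by measurable
  have sub: "{\<omega> \<in> space PM. \<not> \<bar>estimate e \<omega> - mu\<bar> \<le> e}
      \<subseteq> {\<omega> \<in> space PM. 1 \<le> \<Phi> \<omega>} \<union> {\<omega> \<in> space PM. \<not> (C0 \<omega> \<and> Pr \<omega>)}"
  proof safe
    fix \<omega> assume \<omega>: "\<omega> \<in> space PM" and bad: "\<not> \<bar>estimate e \<omega> - mu\<bar> \<le> e" and G: "C0 \<omega>" "Pr \<omega>"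
    define k where "k = T2 e \<omega>"
    define N where "N = n + k"
    have kK: "k \<le> K" using k_le_K[OF G(1)] by (simp add: k_def)
    have Npos: "0 < real N" using n_ge2 by (simp add: N_def)
    define S where "S = (\<Sum>i<N. \<omega> i - mu)"
    have est: "estimate e \<omega> - mu = S / real N"
      unfolding estimate_def emp_mean_def num_samples_def S_def N_def k_def
      using Npos by (simp add: sum_subtractf field_simps N_def k_def)
    have "S = A \<omega> + (\<Sum>i\<in>{n..<N}. \<omega> i - mu)"
      unfolding S_def A_def N_def
      by (simp add: lessThan_atLeast0 sum.atLeastLessThan_concat)
    also have "(\<Sum>i\<in>{n..<N}. \<omega> i - mu) = (\<Sum>i\<in>J. cc i \<omega> * (\<omega> i - mu))"
    proof -
      have "(\<Sum>i\<in>J. cc i \<omega> * (\<omega> i - mu)) = (\<Sum>i\<in>J. if i < N then \<omega> i - mu else 0)"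
        unfolding cc_def N_def k_def by (intro sum.cong) auto
      also have "\<dots> = (\<Sum>i\<in>{x\<in>J. x < N}. \<omega> i - mu)"
        by (rule sum.inter_filter[symmetric]) (simp add: J_def)
      also have "{x\<in>J. x < N} = {n..<N}" using kK unfolding J_def N_def by auto
      finally show ?thesis by simp
    qed
    finally have SAB: "S = A \<omega> + (\<Sum>i\<in>J. cc i \<omega> * (\<omega> i - mu))" .
    have "e < \<bar>S\<bar> / real N" using bad Npos unfolding est by simp
    then have "e * real N < \<bar>S\<bar>" by (subst (asm) pos_less_divide_eq[OF Npos])
    then have "(e * real N)\<^sup>2 < \<bar>S\<bar>\<^sup>2" using e Npos by (intro power_strict_mono) auto
    then have lt: "e\<^sup>2 * (real N)\<^sup>2 < S\<^sup>2" by (simp add: power_mult_distrib)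
    have W: "W Pr \<omega> = 1 / (e\<^sup>2 * (real N)\<^sup>2)" unfolding W_def N_def k_def using G by simp
    have "\<Phi> \<omega> = S\<^sup>2 / (e\<^sup>2 * (real N)\<^sup>2)" unfolding \<Phi>_def W SAB[symmetric] by simp
    then show "1 \<le> \<Phi> \<omega>" using lt e Npos by simp
  qed
  have "PS.P.prob {\<omega> \<in> space PM. \<not> \<bar>estimate e \<omega> - mu\<bar> \<le> e}
      \<le> PS.P.prob ({\<omega> \<in> space PM. 1 \<le> \<Phi> \<omega>} \<union> {\<omega> \<in> space PM. \<not> (C0 \<omega> \<and> Pr \<omega>)})"
    by (rule PS.P.finite_measure_mono[OF sub]) measurable
  also have "\<dots> \<le> PS.P.prob {\<omega> \<in> space PM. 1 \<le> \<Phi> \<omega>} + PS.P.prob {\<omega> \<in> space PM. \<not> (C0 \<omega> \<and> Pr \<omega>)}"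
    by (rule measure_Un_le) measurable
  also have "PS.P.prob {\<omega> \<in> space PM. 1 \<le> \<Phi> \<omega>} \<le> (\<integral>\<omega>. \<Phi> \<omega> \<partial>PM) / 1"
  proof (rule integral_Markov_inequality_measure[where A="space PM"])
    show "integrable PM \<Phi>"
    proof (rule integrable_cube[where c="(1 / e\<^sup>2) * (real n + real K)\<^sup>2"])
      fix \<omega> assume c: "cube \<omega>"
      have "\<bar>(\<Sum>i\<in>J. cc i \<omega> * (\<omega> i - mu))\<bar> \<le> (\<Sum>i\<in>J. \<bar>cc i \<omega> * (\<omega> i - mu)\<bar>)" by (rule sum_abs)
      also have "\<dots> \<le> (\<Sum>i\<in>J. 1)"
        using dev_bound[OF c] by (intro sum_mono) (auto simp: cc_def abs_mult)
      finally have "\<bar>(\<Sum>i\<in>J. cc i \<omega> * (\<omega> i - mu))\<bar> \<le> real K" by (simp add: J_def)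
      then have "\<bar>A \<omega> + (\<Sum>i\<in>J. cc i \<omega> * (\<omega> i - mu))\<bar> \<le> real n + real K" using A_abs[OF c] by linarith
      then have "(A \<omega> + (\<Sum>i\<in>J. cc i \<omega> * (\<omega> i - mu)))\<^sup>2 \<le> (real n + real K)\<^sup>2"
        by (metis abs_le_square_iff abs_of_nonneg of_nat_0_le_iff add_nonneg_nonneg)
      then have le: "W Pr \<omega> * (A \<omega> + (\<Sum>i\<in>J. cc i \<omega> * (\<omega> i - mu)))\<^sup>2 \<le> (1 / e\<^sup>2) * (real n + real K)\<^sup>2"
        using W_bound[of Pr \<omega>] by (intro mult_mono) auto
      have "0 \<le> W Pr \<omega> * (A \<omega> + (\<Sum>i\<in>J. cc i \<omega> * (\<omega> i - mu)))\<^sup>2"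
        using W_bound[of Pr \<omega>] by simp
      then show "\<bar>\<Phi> \<omega>\<bar> \<le> (1 / e\<^sup>2) * (real n + real K)\<^sup>2"
        unfolding \<Phi>_def using le by (simp only: abs_of_nonneg)
    qed measurable
    show "AE x in PM. 0 \<le> \<Phi> x" unfolding \<Phi>_def using W_bound by simp
  qed auto
  also have "(\<integral>\<omega>. \<Phi> \<omega> \<partial>PM) = (\<integral>\<omega>. W Pr \<omega> * (A \<omega>)\<^sup>2 \<partial>PM) + s2 * (\<Sum>i\<in>J. \<integral>\<omega>. W Pr \<omega> * (cc i \<omega> * cc i \<omega>) \<partial>PM)"
    unfolding \<Phi>_def
    using block[OF FB_W[OF Prm Prr] FB_A FB_cc, of J "\<lambda>x. x - mu"] BB_poly f1_props
    by (simp add: J_def)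
  also have "(\<Sum>i\<in>J. \<integral>\<omega>. W Pr \<omega> * (cc i \<omega> * cc i \<omega>) \<partial>PM) = (\<integral>\<omega>. W Pr \<omega> * real (T2 e \<omega>) \<partial>PM)"
  proof -
    have "(\<Sum>i\<in>J. \<integral>\<omega>. W Pr \<omega> * (cc i \<omega> * cc i \<omega>) \<partial>PM) = (\<integral>\<omega>. (\<Sum>i\<in>J. W Pr \<omega> * (cc i \<omega> * cc i \<omega>)) \<partial>PM)"
      using Bochner_Integration.integral_sum[where I=J and M=PM and f="\<lambda>i \<omega>. W Pr \<omega> * (cc i \<omega> * cc i \<omega>)"]
        FB_integrable[OF FB_mult[OF FB_W[OF Prm Prr] FB_mult[OF FB_cc FB_cc]]] by simp
    also have "\<dots> = (\<integral>\<omega>. W Pr \<omega> * real (T2 e \<omega>) \<partial>PM)"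
    proof (rule Bochner_Integration.integral_cong[OF refl])
      fix \<omega>
      show "(\<Sum>i\<in>J. W Pr \<omega> * (cc i \<omega> * cc i \<omega>)) = W Pr \<omega> * real (T2 e \<omega>)"
      proof (cases "C0 \<omega> \<and> Pr \<omega>")
        case False
        then have "W Pr \<omega> = 0" unfolding W_def by auto
        then show ?thesis by simp
      next
        case True
        have kK: "T2 e \<omega> \<le> K" using k_le_K True by blast
        have "(\<Sum>i\<in>J. cc i \<omega> * cc i \<omega>) = (\<Sum>i\<in>J. if i < n + T2 e \<omega> then 1 else 0)"
          unfolding cc_def by (intro sum.cong) auto
        also have "\<dots> = (\<Sum>i\<in>{x\<in>J. x < n + T2 e \<omega>}. 1)"
          by (rule sum.inter_filter[symmetric]) (simp add: J_def)
        also have "{x\<in>J. x < n + T2 e \<omega>} = {n..<n + T2 e \<omega>}" using kK unfolding J_def by auto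
        finally show ?thesis by (simp add: sum_distrib_left[symmetric])
      qed
    qed
    finally show ?thesis .
  qed
  finally show ?thesis by simp
qed


lemma FB_Q: "FB n Q"
  unfolding FB_def
proof (intro conjI exI[of _ "real n"] allI impI)
  show "Q \<in> borel_measurable (PiM {..<n} (\<lambda>_. D))" unfolding Q_def[abs_def] by measurable
  fix \<omega>
  show "Q (restrict \<omega> {..<n}) = Q \<omega>" unfolding Q_def by simp
  assume c: "cube \<omega>"
  have "\<bar>Q \<omega>\<bar> = Q \<omega>" unfolding Q_def by (simp add: sum_nonneg)
  also have "\<dots> \<le> (\<Sum>i<n. 1)" unfolding Q_def
    using dev_bound[OF c] by (intro sum_mono) (simp add: abs_square_le_1)
  finally show "\<bar>Q \<omega>\<bar> \<le> real n" by simp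
qed

lemma prob_notC0: "PS.P.prob {\<omega> \<in> space PM. \<not> C0 \<omega>} = 0"
  using PS.P.prob_eq_0_AE[of "\<lambda>\<omega>. \<not> C0 \<omega>"] AE_C0 by simp

lemma N_ge_n: "real n \<le> real (n + T2 e \<omega>)" by simp

lemma Wk_bound: "W Pr \<omega> * real (T2 e \<omega>) \<le> (if C0 \<omega> \<and> Pr \<omega> then 1 / (e\<^sup>2 * real (n + T2 e \<omega>)) else 0)"
proof -
  define N where "N = real (n + T2 e \<omega>)"
  have N: "0 < N" using n_ge2 by (simp add: N_def)
  have "real (T2 e \<omega>) \<le> N" by (simp add: N_def)
  then have "real (T2 e \<omega>) / (e\<^sup>2 * N\<^sup>2) \<le> N / (e\<^sup>2 * N\<^sup>2)" using e N by (intro divide_right_mono) auto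
  also have "\<dots> = 1 / (e\<^sup>2 * N)" using N by (simp add: power2_eq_square)
  finally show ?thesis unfolding W_def N_def[symmetric] by simp
qed

lemma case1:
  assumes s: "s2 \<le> 3 * e"
  shows "PS.P.prob {\<omega> \<in> space PM. \<not> \<bar>estimate e \<omega> - mu\<bar> \<le> e} \<le> 3/5"
proof -
  let ?Pr = "\<lambda>_::nat \<Rightarrow> real. True"
  have np: "0 < real n" using n_ge2 by simp
  have en: "10 \<le> e * real n" using n_ge e by (simp add: field_simps)
  have W1: "W ?Pr \<omega> \<le> 1 / (e\<^sup>2 * (real n)\<^sup>2)" for \<omega>
  proof -
    have "e\<^sup>2 * (real n)\<^sup>2 \<le> e\<^sup>2 * (real (n + T2 e \<omega>))\<^sup>2"
      using e by (intro mult_left_mono power_mono) auto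
    then show ?thesis unfolding W_def using e np by (auto intro!: divide_left_mono)
  qed
  have I1: "(\<integral>\<omega>. W ?Pr \<omega> * (A \<omega>)\<^sup>2 \<partial>PM) \<le> (\<integral>\<omega>. (1 / (e\<^sup>2 * (real n)\<^sup>2)) * (A \<omega>)\<^sup>2 \<partial>PM)"
  proof (rule integral_mono_AE')
    show "integrable PM (\<lambda>\<omega>. 1 / (e\<^sup>2 * (real n)\<^sup>2) * (A \<omega>)\<^sup>2)"
      using FB_integrable[OF FB_mult[OF FB_A FB_A]] by (simp add: power2_eq_square)
    show "AE \<omega> in PM. W ?Pr \<omega> * (A \<omega>)\<^sup>2 \<le> 1 / (e\<^sup>2 * (real n)\<^sup>2) * (A \<omega>)\<^sup>2"
      by (rule AE_I2, rule mult_right_mono[OF W1]) simp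
  qed auto
  also have "\<dots> = s2 / (e\<^sup>2 * real n)" using EA2 np by (simp add: power2_eq_square)
  finally have I1: "(\<integral>\<omega>. W ?Pr \<omega> * (A \<omega>)\<^sup>2 \<partial>PM) \<le> s2 / (e\<^sup>2 * real n)" .
  have I2: "(\<integral>\<omega>. W ?Pr \<omega> * real (T2 e \<omega>) \<partial>PM) \<le> (\<integral>\<omega>. 1 / (e\<^sup>2 * real n) \<partial>PM)"
  proof (rule integral_mono_AE')
    show "AE \<omega> in PM. W ?Pr \<omega> * real (T2 e \<omega>) \<le> 1 / (e\<^sup>2 * real n)"
    proof (intro AE_I2)
      fix \<omega>
      have q: "1 / (e\<^sup>2 * real (n + T2 e \<omega>)) \<le> 1 / (e\<^sup>2 * real n)"
        using e np by (intro divide_left_mono mult_left_mono) auto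
      have p: "0 \<le> 1 / (e\<^sup>2 * real n)" using e np by simp
      show "W ?Pr \<omega> * real (T2 e \<omega>) \<le> 1 / (e\<^sup>2 * real n)"
      proof (cases "C0 \<omega>")
        case True
        then have "W ?Pr \<omega> * real (T2 e \<omega>) \<le> 1 / (e\<^sup>2 * real (n + T2 e \<omega>))"
          using Wk_bound[of ?Pr \<omega>] by simp
        then show ?thesis using q by linarith
      next
        case False
        then have "W ?Pr \<omega> = 0" unfolding W_def by simp
        then show ?thesis using p by simp
      qed
    qed
  qed (use e np in auto)
  have I2': "s2 * (\<integral>\<omega>. W ?Pr \<omega> * real (T2 e \<omega>) \<partial>PM) \<le> s2 / (e\<^sup>2 * real n)"
    using mult_left_mono[OF I2 s2_bounds(1)] PS.P.prob_space by simp
  have "PS.P.prob {\<omega> \<in> space PM. \<not> \<bar>estimate e \<omega> - mu\<bar> \<le> e} \<le> s2 / (e\<^sup>2 * real n) + s2 / (e\<^sup>2 * real n) + 0"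
  proof -
    have mb: "PS.P.prob {\<omega> \<in> space PM. \<not> \<bar>estimate e \<omega> - mu\<bar> \<le> e}
     \<le> (\<integral>\<omega>. W ?Pr \<omega> * (A \<omega>)\<^sup>2 \<partial>PM) + s2 * (\<integral>\<omega>. W ?Pr \<omega> * real (T2 e \<omega>) \<partial>PM)
       + PS.P.prob {\<omega> \<in> space PM. \<not> (C0 \<omega> \<and> ?Pr \<omega>)}"
      by (rule main_bound) auto
    have "PS.P.prob {\<omega> \<in> space PM. \<not> (C0 \<omega> \<and> ?Pr \<omega>)} = 0" using prob_notC0 by simp
    then show ?thesis using mb I1 I2' by linarith
  qed
  also have "\<dots> = 2 * s2 / (e * (e * real n))" by (simp add: power2_eq_square)
  also have "\<dots> \<le> 2 * (3 * e) / (e * 10)"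
    using s s2_bounds e en by (intro frac_le mult_left_mono) auto
  also have "\<dots> = 3/5" using e by simp
  finally show ?thesis .
qed



lemma case2:
  assumes s: "3 * e < s2"
  shows "PS.P.prob {\<omega> \<in> space PM. \<not> \<bar>estimate e \<omega> - mu\<bar> \<le> e} \<le> 2/5"
proof -
  define Pr where "Pr \<omega> \<longleftrightarrow> real n * s2 / 2 \<le> Q \<omega> \<and> (A \<omega>)\<^sup>2 \<le> (real n)\<^sup>2 * s2 / 4" for \<omega>
  have np: "0 < real n" using n_ge2 by simp
  have spos: "0 < s2" using s e by linarith
  have s1: "s2 \<le> 1" using s2_bounds by simp
  have en: "10 \<le> e * real n" using n_ge e by (simp add: field_simps)
  have ns: "30 \<le> real n * s2"
  proof -
    have "30 \<le> (e * real n) * 3" using en by linarith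
    also have "\<dots> \<le> s2 * real n" using s np by (simp add: mult.commute mult.left_commute)
    finally show ?thesis by (simp add: mult.commute)
  qed
  have n30: "30 \<le> real n"
  proof -
    have "e * real n \<le> (1/3) * real n" using s s1 np by (intro mult_right_mono) auto
    then show ?thesis using en by linarith
  qed
  have Am[measurable]: "A \<in> borel_measurable (PiM {..<n} (\<lambda>_. D))" using FB_A unfolding FB_def by blast
  have Qm[measurable]: "Q \<in> borel_measurable (PiM {..<n} (\<lambda>_. D))" using FB_Q unfolding FB_def by blast
  have Prm: "Measurable.pred (PiM {..<n} (\<lambda>_. D)) Pr" unfolding Pr_def by measurable
  have Prr: "Pr (restrict \<omega> {..<n}) = Pr \<omega>" for \<omega>
    using FB_A FB_Q unfolding FB_def Pr_def by simp
  have AmP[measurable]: "A \<in> borel_measurable PM" "Q \<in> borel_measurable PM"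
    using FB_meas[OF FB_A] FB_meas[OF FB_Q] by auto
  have Nbig: "15 * s2 / e\<^sup>2 \<le> real (n + T2 e \<omega>)" if G: "C0 \<omega> \<and> Pr \<omega>" for \<omega>
  proof -
    have q: "real n * s2 / 2 \<le> Q \<omega>" and a: "(A \<omega>)\<^sup>2 \<le> (real n)\<^sup>2 * s2 / 4" using G unfolding Pr_def by auto
    have "(A \<omega>)\<^sup>2 / real n \<le> ((real n)\<^sup>2 * s2 / 4) / real n" using a np by (intro divide_right_mono) auto
    also have "\<dots> = real n * s2 / 4" using np by (simp add: power2_eq_square)
    finally have a': "(A \<omega>)\<^sup>2 / real n \<le> real n * s2 / 4" .
    have d: "(real n - 1) * emp_var n \<omega> = Q \<omega> - (A \<omega>)\<^sup>2 / real n" using Q_decomp[of \<omega>] by simp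
    have "(real n - 1) * (s2 / 4) \<le> real n * s2 / 4" using spos by (simp add: field_simps)
    also have "\<dots> \<le> Q \<omega> - (A \<omega>)\<^sup>2 / real n" using q a' by linarith
    finally have "(real n - 1) * (s2 / 4) \<le> (real n - 1) * emp_var n \<omega>" using d by simp
    then have v: "s2 / 4 \<le> emp_var n \<omega>" using n_ge2 by (subst (asm) mult_le_cancel_left_pos) auto
    have "15 * s2 / e\<^sup>2 = 60 * (s2 / 4) / e\<^sup>2" by simp
    also have "\<dots> \<le> 60 * emp_var n \<omega> / e\<^sup>2" using v e by (intro divide_right_mono) auto
    also have "\<dots> \<le> real n + real (T2 e \<omega>)" using T2_lower[OF e] by simp
    finally show ?thesis by simp
  qed
  have I1: "(\<integral>\<omega>. W Pr \<omega> * (A \<omega>)\<^sup>2 \<partial>PM) \<le> (\<integral>\<omega>. (1 / (15 * real n * s2)) * (A \<omega>)\<^sup>2 \<partial>PM)"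
  proof (rule integral_mono_AE')
    show "integrable PM (\<lambda>\<omega>. 1 / (15 * real n * s2) * (A \<omega>)\<^sup>2)"
      using FB_integrable[OF FB_mult[OF FB_A FB_A]] by (simp add: power2_eq_square)
    show "AE \<omega> in PM. W Pr \<omega> * (A \<omega>)\<^sup>2 \<le> 1 / (15 * real n * s2) * (A \<omega>)\<^sup>2"
    proof (rule AE_I2, rule mult_right_mono)
      fix \<omega>
      show "W Pr \<omega> \<le> 1 / (15 * real n * s2)"
      proof (cases "C0 \<omega> \<and> Pr \<omega>")
        case True
        define N where "N = real (n + T2 e \<omega>)"
        have N1: "15 * s2 / e\<^sup>2 \<le> N" using Nbig[OF True] by (simp add: N_def)
        have N2: "real n \<le> N" by (simp add: N_def)
        have "15 * real n * s2 = e\<^sup>2 * (real n * (15 * s2 / e\<^sup>2))" using e by (simp add: field_simps)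
        also have "\<dots> \<le> e\<^sup>2 * (N * N)"
          using N1 N2 np spos e by (intro mult_left_mono mult_mono) auto
        finally have le: "15 * real n * s2 \<le> e\<^sup>2 * N\<^sup>2" by (simp add: power2_eq_square)
        have "1 / (e\<^sup>2 * N\<^sup>2) \<le> 1 / (15 * real n * s2)"
          using le np spos by (intro frac_le) auto
        then show ?thesis using True unfolding W_def N_def by simp
      next
        case False
        then have "W Pr \<omega> = 0" unfolding W_def by auto
        then show ?thesis using np spos by simp
      qed
    qed simp
  qed (use np spos in auto)
  also have "\<dots> = 1/15" using EA2 np spos by simp
  finally have I1: "(\<integral>\<omega>. W Pr \<omega> * (A \<omega>)\<^sup>2 \<partial>PM) \<le> 1/15" .
  have I2: "(\<integral>\<omega>. W Pr \<omega> * real (T2 e \<omega>) \<partial>PM) \<le> (\<integral>\<omega>. 1 / (15 * s2) \<partial>PM)"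
  proof (rule integral_mono_AE')
    show "AE \<omega> in PM. W Pr \<omega> * real (T2 e \<omega>) \<le> 1 / (15 * s2)"
    proof (rule AE_I2)
      fix \<omega>
      show "W Pr \<omega> * real (T2 e \<omega>) \<le> 1 / (15 * s2)"
      proof (cases "C0 \<omega> \<and> Pr \<omega>")
        case True
        define N where "N = real (n + T2 e \<omega>)"
        have N1: "15 * s2 / e\<^sup>2 \<le> N" using Nbig[OF True] by (simp add: N_def)
        have "15 * s2 = e\<^sup>2 * (15 * s2 / e\<^sup>2)" using e by simp
        also have "\<dots> \<le> e\<^sup>2 * N" using N1 e by (intro mult_left_mono) auto
        finally have le: "15 * s2 \<le> e\<^sup>2 * N" .
        have "1 / (e\<^sup>2 * N) \<le> 1 / (15 * s2)" using le spos by (intro frac_le) auto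
        moreover have "W Pr \<omega> * real (T2 e \<omega>) \<le> 1 / (e\<^sup>2 * N)"
          using Wk_bound[of Pr \<omega>] True unfolding N_def by simp
        ultimately show ?thesis by linarith
      next
        case False
        then have "W Pr \<omega> = 0" unfolding W_def by auto
        then show ?thesis using spos by simp
      qed
    qed
  qed (use spos in auto)
  then have I2': "s2 * (\<integral>\<omega>. W Pr \<omega> * real (T2 e \<omega>) \<partial>PM) \<le> 1/15"
    using mult_left_mono[OF I2 s2_bounds(1)] PS.P.prob_space spos by simp
  define c1 where "c1 = (real n * s2 / 2)\<^sup>2"
  define c2 where "c2 = (real n)\<^sup>2 * s2 / 4"
  have c1pos: "0 < c1" using np spos by (simp add: c1_def)
  have c2pos: "0 < c2" using np spos by (simp add: c2_def)
  have subG: "{\<omega> \<in> space PM. \<not> (C0 \<omega> \<and> Pr \<omega>)} \<subseteq>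
     {\<omega> \<in> space PM. \<not> C0 \<omega>} \<union> ({\<omega> \<in> space PM. c1 \<le> (Q \<omega> - real n * s2)\<^sup>2} \<union> {\<omega> \<in> space PM. c2 \<le> (A \<omega>)\<^sup>2})"
  proof safe
    fix \<omega> assume "\<omega> \<in> space PM" "\<not> Pr \<omega>" "\<not> c2 \<le> (A \<omega>)\<^sup>2"
    then have "Q \<omega> < real n * s2 / 2" unfolding Pr_def c2_def by auto
    then have "real n * s2 / 2 \<le> \<bar>Q \<omega> - real n * s2\<bar>" by linarith
    then have "(real n * s2 / 2)\<^sup>2 \<le> \<bar>Q \<omega> - real n * s2\<bar>\<^sup>2" using np spos by (intro power_mono) auto
    then show "c1 \<le> (Q \<omega> - real n * s2)\<^sup>2" unfolding c1_def by simp
  qed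
  have pG: "PS.P.prob {\<omega> \<in> space PM. \<not> (C0 \<omega> \<and> Pr \<omega>)} \<le>
     PS.P.prob {\<omega> \<in> space PM. \<not> C0 \<omega>} + (PS.P.prob {\<omega> \<in> space PM. c1 \<le> (Q \<omega> - real n * s2)\<^sup>2} + PS.P.prob {\<omega> \<in> space PM. c2 \<le> (A \<omega>)\<^sup>2})"
  proof -
    have "PS.P.prob {\<omega> \<in> space PM. \<not> (C0 \<omega> \<and> Pr \<omega>)} \<le>
      PS.P.prob ({\<omega> \<in> space PM. \<not> C0 \<omega>} \<union> ({\<omega> \<in> space PM. c1 \<le> (Q \<omega> - real n * s2)\<^sup>2} \<union> {\<omega> \<in> space PM. c2 \<le> (A \<omega>)\<^sup>2}))"
      by (rule PS.P.finite_measure_mono[OF subG]) measurable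
    also have "\<dots> \<le> PS.P.prob {\<omega> \<in> space PM. \<not> C0 \<omega>} + PS.P.prob ({\<omega> \<in> space PM. c1 \<le> (Q \<omega> - real n * s2)\<^sup>2} \<union> {\<omega> \<in> space PM. c2 \<le> (A \<omega>)\<^sup>2})"
      by (rule measure_Un_le) measurable
    also have "PS.P.prob ({\<omega> \<in> space PM. c1 \<le> (Q \<omega> - real n * s2)\<^sup>2} \<union> {\<omega> \<in> space PM. c2 \<le> (A \<omega>)\<^sup>2})
       \<le> PS.P.prob {\<omega> \<in> space PM. c1 \<le> (Q \<omega> - real n * s2)\<^sup>2} + PS.P.prob {\<omega> \<in> space PM. c2 \<le> (A \<omega>)\<^sup>2}"
      by (rule measure_Un_le) measurable
    finally show ?thesis by simp
  qed
  have intQ: "integrable PM (\<lambda>\<omega>. (Q \<omega> - real n * s2)\<^sup>2)"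
  proof -
    have "FB n (\<lambda>\<omega>. Q \<omega> - real n * s2)"
      using FB_Q unfolding FB_def
    proof (elim conjE exE, intro conjI exI[of _ "_ + \<bar>real n * s2\<bar>"] allI impI)
      fix c \<omega> assume "\<forall>\<omega>. cube \<omega> \<longrightarrow> \<bar>Q \<omega>\<bar> \<le> c" "cube \<omega>"
      then show "\<bar>Q \<omega> - real n * s2\<bar> \<le> c + \<bar>real n * s2\<bar>" by force
    qed auto
    from FB_integrable[OF FB_mult[OF this this]] show ?thesis by (simp add: power2_eq_square)
  qed
  have intA: "integrable PM (\<lambda>\<omega>. (A \<omega>)\<^sup>2)"
    using FB_integrable[OF FB_mult[OF FB_A FB_A]] by (simp add: power2_eq_square)
  have pQ: "PS.P.prob {\<omega> \<in> space PM. c1 \<le> (Q \<omega> - real n * s2)\<^sup>2} \<le> (real n * s2) / c1"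
  proof -
    have "PS.P.prob {\<omega> \<in> space PM. c1 \<le> (Q \<omega> - real n * s2)\<^sup>2} \<le> (\<integral>\<omega>. (Q \<omega> - real n * s2)\<^sup>2 \<partial>PM) / c1"
      by (rule integral_Markov_inequality_measure[OF intQ _ _ c1pos, where A="space PM"]) auto
    also have "\<dots> \<le> (real n * s2) / c1" using EQ2 c1pos by (intro divide_right_mono) auto
    finally show ?thesis .
  qed
  have pA: "PS.P.prob {\<omega> \<in> space PM. c2 \<le> (A \<omega>)\<^sup>2} \<le> (real n * s2) / c2"
  proof -
    have "PS.P.prob {\<omega> \<in> space PM. c2 \<le> (A \<omega>)\<^sup>2} \<le> (\<integral>\<omega>. (A \<omega>)\<^sup>2 \<partial>PM) / c2"
      by (rule integral_Markov_inequality_measure[OF intA _ _ c2pos, where A="space PM"]) auto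
    then show ?thesis using EA2 by simp
  qed
  have r1: "(real n * s2) / c1 \<le> 2/15"
  proof -
    have "(real n * s2) / c1 = 4 / (real n * s2)" unfolding c1_def using np spos by (simp add: field_simps power2_eq_square)
    also have "\<dots> \<le> 4 / 30" using ns by (intro divide_left_mono) auto
    finally show ?thesis by simp
  qed
  have r2: "(real n * s2) / c2 \<le> 2/15"
  proof -
    have "(real n * s2) / c2 = 4 / real n" unfolding c2_def using np spos by (simp add: field_simps power2_eq_square)
    also have "\<dots> \<le> 4 / 30" using n30 by (intro divide_left_mono) auto
    finally show ?thesis by simp
  qed
  have mb: "PS.P.prob {\<omega> \<in> space PM. \<not> \<bar>estimate e \<omega> - mu\<bar> \<le> e}
     \<le> (\<integral>\<omega>. W Pr \<omega> * (A \<omega>)\<^sup>2 \<partial>PM) + s2 * (\<integral>\<omega>. W Pr \<omega> * real (T2 e \<omega>) \<partial>PM)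
       + PS.P.prob {\<omega> \<in> space PM. \<not> (C0 \<omega> \<and> Pr \<omega>)}"
    by (rule main_bound[OF Prm Prr])
  show ?thesis using mb I1 I2' pG prob_notC0 pQ pA r1 r2 by linarith
qed

lemma part1: "1/4 \<le> PS.P.prob {\<omega> \<in> space PM. \<bar>estimate e \<omega> - mu\<bar> \<le> e}"
proof -
  have F: "PS.P.prob {\<omega> \<in> space PM. \<not> \<bar>estimate e \<omega> - mu\<bar> \<le> e} \<le> 3/5"
    using case1 case2 by (cases "s2 \<le> 3 * e") force+
  have "{\<omega> \<in> space PM. \<bar>estimate e \<omega> - mu\<bar> \<le> e} = space PM - {\<omega> \<in> space PM. \<not> \<bar>estimate e \<omega> - mu\<bar> \<le> e}"
    by auto
  then have "PS.P.prob {\<omega> \<in> space PM. \<bar>estimate e \<omega> - mu\<bar> \<le> e} = 1 - PS.P.prob {\<omega> \<in> space PM. \<not> \<bar>estimate e \<omega> - mu\<bar> \<le> e}"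
    by (simp add: PS.P.prob_compl)
  then show ?thesis using F by linarith
qed

lemma EQ: "(\<integral>\<omega>. Q \<omega> \<partial>PM) = real n * s2"
proof -
  have "(\<integral>\<omega>. Q \<omega> \<partial>PM) = (\<Sum>i<n. \<integral>\<omega>. (\<omega> i - mu)\<^sup>2 \<partial>PM)"
    unfolding Q_def
    by (rule Bochner_Integration.integral_sum) (rule int_comp[OF ints_D(3)])
  also have "\<dots> = (\<Sum>i<n. s2)"
    using integral_comp[of "\<lambda>x. (x - mu)\<^sup>2"] ints_D(3) unfolding s2_def by auto
  finally show ?thesis by simp
qed

lemma part2:
  assumes e1: "e \<le> 1"
  shows "(\<integral>\<^sup>+ \<omega>. ennreal (real (num_samples e \<omega>)) \<partial>PM) \<le> ennreal (120 * (s2 / e\<^sup>2 + 1 / e))"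
proof -
  define c where "c = 60 / ((real n - 1) * e\<^sup>2)"
  have n1: "1 \<le> real n - 1" using n_ge2 by simp
  have cpos: "0 \<le> c" using n1 e unfolding c_def by simp
  have pw: "real (num_samples e \<omega>) \<le> real n + 1 + c * Q \<omega>" for \<omega>
  proof -
    have "(real n - 1) * emp_var n \<omega> \<le> Q \<omega>" using Q_decomp[of \<omega>] n_ge2 by simp
    then have v: "emp_var n \<omega> \<le> Q \<omega> / (real n - 1)" using n1 by (simp add: field_simps)
    have "60 * emp_var n \<omega> / e\<^sup>2 \<le> 60 * (Q \<omega> / (real n - 1)) / e\<^sup>2"
      using v e by (intro divide_right_mono mult_left_mono) auto
    also have "\<dots> = c * Q \<omega>" unfolding c_def by (simp add: field_simps)
    finally show ?thesis using T2_upper[OF e, of \<omega>] unfolding num_samples_def by simp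
  qed
  have intQ: "integrable PM Q" using FB_integrable[OF FB_Q] .
  have "(\<integral>\<^sup>+ \<omega>. ennreal (real (num_samples e \<omega>)) \<partial>PM) \<le> (\<integral>\<^sup>+ \<omega>. ennreal (real n + 1 + c * Q \<omega>) \<partial>PM)"
    by (rule nn_integral_mono) (use pw in \<open>simp add: ennreal_leI\<close>)
  also have "\<dots> = ennreal (\<integral>\<omega>. real n + 1 + c * Q \<omega> \<partial>PM)"
  proof (rule nn_integral_eq_integral)
    show "integrable PM (\<lambda>\<omega>. real n + 1 + c * Q \<omega>)" using intQ by simp
    have "0 \<le> Q \<omega>" for \<omega> unfolding Q_def by (simp add: sum_nonneg)
    then show "AE \<omega> in PM. 0 \<le> real n + 1 + c * Q \<omega>" using cpos by simp
  qed
  also have "(\<integral>\<omega>. real n + 1 + c * Q \<omega> \<partial>PM) = real n + 1 + c * (real n * s2)"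
    using intQ EQ PS.P.prob_space by simp
  also have "\<dots> \<le> 120 * (s2 / e\<^sup>2 + 1 / e)"
  proof -
    have a: "real n + 1 \<le> 13 / e"
    proof -
      have "real n + 1 \<le> 3 + 10 / e" using T1_le[OF e] by simp
      also have "3 \<le> 3 / e" using e e1 by (simp add: field_simps)
      finally show ?thesis by simp
    qed
    have "c * real n = 60 * (real n / (real n - 1)) / e\<^sup>2" unfolding c_def by (simp add: field_simps)
    also have "real n / (real n - 1) \<le> 2" using n1 by (simp add: field_simps)
    then have "60 * (real n / (real n - 1)) / e\<^sup>2 \<le> 60 * 2 / e\<^sup>2" using e by (intro divide_right_mono) auto
    finally have b: "c * real n * s2 \<le> 120 / e\<^sup>2 * s2" using s2_bounds by (intro mult_right_mono) auto
    have "13 / e \<le> 120 / e" using e by (simp add: divide_right_mono)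
    then show ?thesis using a b by (simp add: algebra_simps)
  qed
  finally show ?thesis by (simp add: ennreal_leI)
qed

end

theorem lemmaB1:
  shows "(\<forall>(D :: real measure) (\<epsilon> :: real).
            prob_space D \<and> sets D = sets borel \<and> (AE x in D. 0 \<le> x \<and> x \<le> 1) \<and> \<epsilon> > 0 \<longrightarrow>
            measure (PiM UNIV (\<lambda>_::nat. D))
              {\<omega> \<in> space (PiM UNIV (\<lambda>_::nat. D)).
                 \<bar>estimate \<epsilon> \<omega> - prob_space.expectation D (\<lambda>x. x)\<bar> \<le> \<epsilon>} \<ge> 1/4)
       \<and> (\<exists>C :: real. \<forall>(D :: real measure) (\<epsilon> :: real).
            prob_space D \<and> sets D = sets borel \<and> (AE x in D. 0 \<le> x \<and> x \<le> 1) \<and> 0 < \<epsilon> \<and> \<epsilon> \<le> 1 \<longrightarrow>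
            (\<integral>\<^sup>+ \<omega>. ennreal (real (num_samples \<epsilon> \<omega>)) \<partial>(PiM UNIV (\<lambda>_::nat. D)))
              \<le> ennreal (C * (prob_space.variance D (\<lambda>x. x) / \<epsilon>^2 + 1 / \<epsilon>)))"
proof (intro conjI)
  show "\<forall>(D :: real measure) (\<epsilon> :: real).
            prob_space D \<and> sets D = sets borel \<and> (AE x in D. 0 \<le> x \<and> x \<le> 1) \<and> \<epsilon> > 0 \<longrightarrow>
            measure (PiM UNIV (\<lambda>_::nat. D))
              {\<omega> \<in> space (PiM UNIV (\<lambda>_::nat. D)).
                 \<bar>estimate \<epsilon> \<omega> - prob_space.expectation D (\<lambda>x. x)\<bar> \<le> \<epsilon>} \<ge> 1/4"
  proof (intro allI impI)
    fix D :: "real measure" and \<epsilon> :: real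
    assume H: "prob_space D \<and> sets D = sets borel \<and> (AE x in D. 0 \<le> x \<and> x \<le> 1) \<and> \<epsilon> > 0"
    have "sre2 D \<epsilon>" unfolding sre2_def sre2_axioms_def sre_def using H by blast
    then interpret sre2 D \<epsilon> .
    show "measure (PiM UNIV (\<lambda>_::nat. D))
              {\<omega> \<in> space (PiM UNIV (\<lambda>_::nat. D)).
                 \<bar>estimate \<epsilon> \<omega> - prob_space.expectation D (\<lambda>x. x)\<bar> \<le> \<epsilon>} \<ge> 1/4"
      using part1 unfolding mu_def by simp
  qed
  show "\<exists>C :: real. \<forall>(D :: real measure) (\<epsilon> :: real).
            prob_space D \<and> sets D = sets borel \<and> (AE x in D. 0 \<le> x \<and> x \<le> 1) \<and> 0 < \<epsilon> \<and> \<epsilon> \<le> 1 \<longrightarrow>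
            (\<integral>\<^sup>+ \<omega>. ennreal (real (num_samples \<epsilon> \<omega>)) \<partial>(PiM UNIV (\<lambda>_::nat. D)))
              \<le> ennreal (C * (prob_space.variance D (\<lambda>x. x) / \<epsilon>^2 + 1 / \<epsilon>))"
  proof (intro exI[of _ 120] allI impI)
    fix D :: "real measure" and \<epsilon> :: real
    assume H: "prob_space D \<and> sets D = sets borel \<and> (AE x in D. 0 \<le> x \<and> x \<le> 1) \<and> 0 < \<epsilon> \<and> \<epsilon> \<le> 1"
    have "sre2 D \<epsilon>" unfolding sre2_def sre2_axioms_def sre_def using H by blast
    then interpret sre2 D \<epsilon> .
    show "(\<integral>\<^sup>+ \<omega>. ennreal (real (num_samples \<epsilon> \<omega>)) \<partial>(PiM UNIV (\<lambda>_::nat. D)))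
              \<le> ennreal (120 * (prob_space.variance D (\<lambda>x. x) / \<epsilon>^2 + 1 / \<epsilon>))"
      using part2 H unfolding s2_def mu_def by simp
  qed
qed

end
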